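(* Let $a$ and $b$ be relatively prime integers with $1<a<b$ and $S=\langle a,b\rangle$. If $x\in I_{i,a}(S)$ for some $i\in\{1,\dots,a-1\}$, then either $x+a\in S$ or $x+a\in I_{i,a}(S)$.
   Context: $\langle a,b\rangle=\{\lambda_1a+\lambda_2b:\lambda_1,\lambda_2\in\mathbb{N}\}$. $I(S)$ is the set of isolated gaps of $S$ ($x\in\mathbb{N}\setminus S$ with $x-1,x+1\in S$), and $I_{i,a}(S)=\{s\in I(S):s\equiv i\pmod a\}$. *)

theory Defs
  imports Main
begin

definition semigroup2 :: "nat \<Rightarrow> nat \<Rightarrow> nat set" where
  "semigroup2 a b = {l1 * a + l2 * b | l1 l2. True}"

text \<open>Isolated gaps: x not in S, with x - 1 and x + 1 in S (x \<ge> 1 so that x - 1 is a natural number).\<close>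
definition isolated_gaps :: "nat set \<Rightarrow> nat set" where
  "isolated_gaps S = {x. x \<notin> S \<and> 1 \<le> x \<and> x - 1 \<in> S \<and> x + 1 \<in> S}"

definition isolated_gaps_mod :: "nat \<Rightarrow> nat \<Rightarrow> nat set \<Rightarrow> nat set" where
  "isolated_gaps_mod i a S = {s \<in> isolated_gaps S. s mod a = i mod a}"

end

theory Submission
  imports Defs
begin

lemma sg_add_a: "s \<in> semigroup2 a b \<Longrightarrow> s + a \<in> semigroup2 a b"
proof -
  assume "s \<in> semigroup2 a b"
  then obtain l1 l2 where "s = l1 * a + l2 * b" unfolding semigroup2_def by blast
  then have "s + a = (Suc l1) * a + l2 * b" by simp
  then show ?thesis unfolding semigroup2_def by blast
qed

theorem lemma4p4:
  fixes a b i x :: nat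
  assumes "coprime a b" and "1 < a" and "a < b"
    and "i \<in> {1..a-1}"
    and "x \<in> isolated_gaps_mod i a (semigroup2 a b)"
  shows "x + a \<in> semigroup2 a b \<or> x + a \<in> isolated_gaps_mod i a (semigroup2 a b)"
proof (cases "x + a \<in> semigroup2 a b")
  case True then show ?thesis by simp
next
  case False
  from assms(5) have x1: "1 \<le> x" and m: "x - 1 \<in> semigroup2 a b" and p: "x + 1 \<in> semigroup2 a b"
    and md: "x mod a = i mod a"
    unfolding isolated_gaps_mod_def isolated_gaps_def by auto
  have "x - 1 + a \<in> semigroup2 a b" using sg_add_a[OF m] .
  moreover have "x - 1 + a = x + a - 1" using x1 by simp
  ultimately have m': "x + a - 1 \<in> semigroup2 a b" by simp
  have "x + 1 + a \<in> semigroup2 a b" using sg_add_a[OF p] .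
  then have p': "x + a + 1 \<in> semigroup2 a b" by (simp add: ac_simps)
  have "(x + a) mod a = i mod a" using md by simp
  then show ?thesis using False m' p' x1
    unfolding isolated_gaps_mod_def isolated_gaps_def by auto
qed

end
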